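(* Let $b(t)$, $t\in[0,1]$, be a Brownian bridge, $F_0(t)=t$, and $T^2(G)=\int_0^1G^2(t)\,dt$. There is a constant $c>0$ such that for every distribution function $F$ on $[0,1]$, $$\mathbf{E}\,\big|T^2(b(F(t)))-T^2(b(t))\big|<c\,T^{1/4}(F-F_0).$$
   Context: $b(F(t))$ denotes the process $t\mapsto b(F(t))$; $T(G)=(T^2(G))^{1/2}$. *)

theory Defs
  imports "HOL-Probability.Probability"
begin

definition T2 :: "(real \<Rightarrow> real) \<Rightarrow> real" where
  "T2 G = (LBINT t=0..1. (G t)\<^sup>2)"

definition T :: "(real \<Rightarrow> real) \<Rightarrow> real" where
  "T G = sqrt (T2 G)"

definition bb_cov :: "real \<Rightarrow> real \<Rightarrow> real" where
  "bb_cov s t = min s t - s * t"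

text \<open>Joint Gaussianity is expressed
  through characteristic functions of all finite linear combinations
  (this also covers the degenerate times 0 and 1).\<close>
definition brownian_bridge :: "'a measure \<Rightarrow> (real \<Rightarrow> 'a \<Rightarrow> real) \<Rightarrow> bool" where
  "brownian_bridge M b \<longleftrightarrow>
     prob_space M \<and>
     (\<forall>t\<in>{0..1}. b t \<in> borel_measurable M) \<and>
     (\<forall>\<omega>\<in>space M. continuous_on {0..1} (\<lambda>t. b t \<omega>)) \<and>
     (\<forall>(n::nat) (ts::nat \<Rightarrow> real) (as::nat \<Rightarrow> real) (u::real).
        (\<forall>i<n. ts i \<in> {0..1}) \<longrightarrow>
        char (distr M borel (\<lambda>\<omega>. \<Sum>i<n. as i * b (ts i) \<omega>)) u
          = complex_of_real (exp (- (u\<^sup>2 / 2) * (\<Sum>i<n. \<Sum>j<n. as i * as j * bb_cov (ts i) (ts j)))))"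

end

theory Submission
  imports Defs
begin



lemma gauss_moment:
  assumes P: "prob_space M" and X[measurable]: "X \<in> borel_measurable M" and v: "v \<ge> 0"
    and ch: "\<And>u. char (distr M borel X) u = complex_of_real (exp (- (u\<^sup>2 / 2) * v))"
  shows "integrable M (\<lambda>\<omega>. (X \<omega>)\<^sup>2) \<and> (\<integral>\<omega>. (X \<omega>)\<^sup>2 \<partial>M) = v"
proof -
  interpret prob_space M by (rule P)
  define \<sigma> where "\<sigma> = sqrt v"
  let ?N = std_normal_distribution
  define D where "D = distr ?N borel (\<lambda>x. \<sigma> * x)"
  interpret N: real_distribution ?N by (rule real_dist_normal_dist)
  have rD: "real_distribution D" unfolding D_def by (rule N.real_distribution_distr) simp
  have rX: "real_distribution (distr M borel X)" by (rule real_distribution_distr) simp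
  have "char D u = char ?N (\<sigma> * u)" for u
    unfolding D_def char_def by (subst integral_distr) (auto simp: mult_ac)
  also have "\<dots> u = complex_of_real (exp (- (u\<^sup>2 / 2) * v))" for u
    by (simp add: char_std_normal_distribution \<sigma>_def power_mult_distrib v)
  finally have "char (distr M borel X) = char D" using ch by auto
  then have eq: "distr M borel X = D" using Levy_uniqueness[OF rX rD] by simp
  have i1: "integrable ?N (\<lambda>x. (\<sigma> * x)\<^sup>2)"
    using integrable_std_normal_distribution_moment[of 2]
    by (simp add: power_mult_distrib)
  have "integrable M (\<lambda>\<omega>. (X \<omega>)\<^sup>2) = integrable (distr M borel X) (\<lambda>x. x\<^sup>2)"
    by (subst integrable_distr_eq) auto
  also have "\<dots> = integrable ?N (\<lambda>x. (\<sigma> * x)\<^sup>2)"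
    unfolding eq D_def by (subst integrable_distr_eq) auto
  finally have I: "integrable M (\<lambda>\<omega>. (X \<omega>)\<^sup>2)" using i1 by simp
  have "(\<integral>\<omega>. (X \<omega>)\<^sup>2 \<partial>M) = (\<integral>x. x\<^sup>2 \<partial>(distr M borel X))"
    by (subst integral_distr) auto
  also have "\<dots> = (\<integral>x. (\<sigma> * x)\<^sup>2 \<partial>?N)"
    unfolding eq D_def by (subst integral_distr) auto
  also have "\<dots> = \<sigma>\<^sup>2 * (\<integral>x. x^(2*1) \<partial>?N)"
    by (simp add: power_mult_distrib)
  also have "\<dots> = v"
    using std_normal_distribution_even_moments(1)[of 1] by (simp add: \<sigma>_def v)
  finally show ?thesis using I by simp
qed




lemma bb_lin:
  assumes bb: "brownian_bridge M b" and s: "s \<in> {0..1}" and t: "t \<in> {0..1}"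
    and v: "0 \<le> s - s\<^sup>2 + c\<^sup>2 * (t - t\<^sup>2) + 2 * c * (min s t - s * t)"
  shows "integrable M (\<lambda>\<omega>. (b s \<omega> + c * b t \<omega>)\<^sup>2) \<and>
    (\<integral>\<omega>. (b s \<omega> + c * b t \<omega>)\<^sup>2 \<partial>M) = s - s\<^sup>2 + c\<^sup>2 * (t - t\<^sup>2) + 2 * c * (min s t - s * t)"
proof (rule gauss_moment)
  show P: "prob_space M" using bb unfolding brownian_bridge_def by auto
  have [measurable]: "b s \<in> borel_measurable M" "b t \<in> borel_measurable M"
    using bb s t unfolding brownian_bridge_def by auto
  show "(\<lambda>\<omega>. b s \<omega> + c * b t \<omega>) \<in> borel_measurable M" by measurable
  show "0 \<le> s - s\<^sup>2 + c\<^sup>2 * (t - t\<^sup>2) + 2 * c * (min s t - s * t)" by (rule v)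
  fix u
  define ts where "ts = (\<lambda>i::nat. if i = 0 then s else t)"
  define as where "as = (\<lambda>i::nat. if i = 0 then 1 else c)"
  have "\<forall>i<2. ts i \<in> {0..1}" using s t by (auto simp: ts_def)
  then have "char (distr M borel (\<lambda>\<omega>. \<Sum>i<2. as i * b (ts i) \<omega>)) u
          = complex_of_real (exp (- (u\<^sup>2 / 2) * (\<Sum>i<2. \<Sum>j<2. as i * as j * bb_cov (ts i) (ts j))))"
    using bb unfolding brownian_bridge_def by blast
  moreover have "(\<lambda>\<omega>. \<Sum>i<2. as i * b (ts i) \<omega>) = (\<lambda>\<omega>. b s \<omega> + c * b t \<omega>)"
    by (simp add: numeral_2_eq_2 as_def ts_def)
  moreover have "(\<Sum>i<2. \<Sum>j<2. as i * as j * bb_cov (ts i) (ts j)) = s - s\<^sup>2 + c\<^sup>2 * (t - t\<^sup>2) + 2 * c * (min s t - s * t)"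
    by (simp add: numeral_2_eq_2 as_def ts_def bb_cov_def power2_eq_square min.commute algebra_simps)
  ultimately show "char (distr M borel (\<lambda>\<omega>. b s \<omega> + c * b t \<omega>)) u =
    complex_of_real (exp (- (u\<^sup>2 / 2) * (s - s\<^sup>2 + c\<^sup>2 * (t - t\<^sup>2) + 2 * c * (min s t - s * t))))" by simp
qed




lemma young_aux: "r > 0 \<Longrightarrow> \<bar>x * y\<bar> \<le> (r * x\<^sup>2 + y\<^sup>2 / r) / 2" for x y r :: real
proof -
  assume l: "r > 0"
  have "0 \<le> (r * \<bar>x\<bar> - \<bar>y\<bar>)\<^sup>2" by simp
  also have "(r * \<bar>x\<bar> - \<bar>y\<bar>)\<^sup>2 = r\<^sup>2 * x\<^sup>2 + y\<^sup>2 - 2 * r * \<bar>x * y\<bar>"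
    by (simp add: power2_eq_square abs_mult algebra_simps)
  finally have "2 * r * \<bar>x * y\<bar> \<le> r * (r * x\<^sup>2 + y\<^sup>2 / r)"
    using l by (simp add: power2_eq_square algebra_simps)
  then have "r * (2 * \<bar>x * y\<bar>) \<le> r * (r * x\<^sup>2 + y\<^sup>2 / r)" by (simp add: mult_ac)
  then have "2 * \<bar>x * y\<bar> \<le> r * x\<^sup>2 + y\<^sup>2 / r" using l by simp
  then show ?thesis by simp
qed

lemma inf_lambda: 
  fixes a d :: real
  assumes d: "d \<ge> 0" and H: "\<And>r. r > 0 \<Longrightarrow> a \<le> (r * d + 1 / r) / 2"
  shows "a \<le> sqrt d"
proof (cases "d = 0")
  case True
  show ?thesis
  proof (rule ccontr)
    assume "\<not> a \<le> sqrt d"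
    then have a: "a > 0" using True by simp
    have "a \<le> (1 / a * d + 1 / (1 / a)) / 2" by (rule H) (use a in simp)
    then have "a \<le> a / 2" using True by simp
    then show False using a by simp
  qed
next
  case False
  then have sd: "sqrt d > 0" using d by simp
  have "a \<le> (1 / sqrt d * d + 1 / (1 / sqrt d)) / 2" by (rule H) (use sd in simp)
  also have "1 / sqrt d * d = sqrt d"
  proof -
    have "d = sqrt d * sqrt d" using d by simp
    then show ?thesis using sd by (metis divide_self_if mult.assoc mult_1 times_divide_eq_left less_irrefl)
  qed
  finally show ?thesis by simp
qed

lemma bb_sq_diff:
  assumes bb: "brownian_bridge M b" and s: "s \<in> {0..1}" and t: "t \<in> {0..1}"
  shows "integrable M (\<lambda>\<omega>. \<bar>(b s \<omega>)\<^sup>2 - (b t \<omega>)\<^sup>2\<bar>) \<and>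
     (\<integral>\<omega>. \<bar>(b s \<omega>)\<^sup>2 - (b t \<omega>)\<^sup>2\<bar> \<partial>M) \<le> sqrt \<bar>s - t\<bar>"
proof -
  have [measurable]: "b s \<in> borel_measurable M" "b t \<in> borel_measurable M"
    using bb s t unfolding brownian_bridge_def by auto
  let ?vX = "s - s\<^sup>2 + (-1)\<^sup>2 * (t - t\<^sup>2) + 2 * (-1) * (min s t - s * t)"
  let ?vY = "s - s\<^sup>2 + 1\<^sup>2 * (t - t\<^sup>2) + 2 * 1 * (min s t - s * t)"
  have eX: "?vX = \<bar>s - t\<bar> - (s - t)\<^sup>2"
    by (cases "s \<le> t") (auto simp: min_def power2_eq_square algebra_simps)
  have vX0: "0 \<le> ?vX"
  proof -
    have a1: "\<bar>s - t\<bar> \<le> 1" using s t by auto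
    have "(s - t)\<^sup>2 = \<bar>s - t\<bar> * \<bar>s - t\<bar>" by (simp add: power2_eq_square abs_mult_self)
    also have "\<dots> \<le> \<bar>s - t\<bar>" by (rule mult_left_le[OF a1]) simp
    finally show ?thesis unfolding eX by simp
  qed
  have vX1: "?vX \<le> \<bar>s - t\<bar>" unfolding eX by simp
  have q1: "0 \<le> s * (1 - s)" "0 \<le> t * (1 - t)" "0 \<le> s * (1 - t)" "0 \<le> t * (1 - s)"
    using s t by auto
  have eY: "?vY = s * (1 - s) + t * (1 - t) + 2 * (min s t - s * t)"
    by (simp add: power2_eq_square algebra_simps)
  have vY0: "0 \<le> ?vY" unfolding eY
  proof (cases "s \<le> t")
    case True
    then have e: "min s t - s * t = s * (1 - t)" by (simp add: min_def algebra_simps)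
    show "0 \<le> s * (1 - s) + t * (1 - t) + 2 * (min s t - s * t)" unfolding e
      by (intro add_nonneg_nonneg mult_nonneg_nonneg q1) simp
  next
    case False
    then have e: "min s t - s * t = t * (1 - s)" by (simp add: min_def algebra_simps)
    show "0 \<le> s * (1 - s) + t * (1 - t) + 2 * (min s t - s * t)" unfolding e
      by (intro add_nonneg_nonneg mult_nonneg_nonneg q1) simp
  qed
  have vY1: "?vY \<le> 1"
  proof -
    have m: "min s t \<le> (s + t) / 2" by simp
    have "?vY \<le> s * (1 - s) + t * (1 - t) + 2 * ((s + t) / 2 - s * t)"
      unfolding eY using m by (intro add_left_mono mult_left_mono diff_right_mono) auto
    also have "\<dots> = 1 - (s + t - 1)\<^sup>2"
      by (simp add: power2_eq_square algebra_simps)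
    also have "\<dots> \<le> 1" by simp
    finally show ?thesis .
  qed
  from bb_lin[OF bb s t vX0] have X: "integrable M (\<lambda>\<omega>. (b s \<omega> - b t \<omega>)\<^sup>2)"
      "(\<integral>\<omega>. (b s \<omega> - b t \<omega>)\<^sup>2 \<partial>M) = ?vX" by simp_all
  from bb_lin[OF bb s t vY0] have Y: "integrable M (\<lambda>\<omega>. (b s \<omega> + b t \<omega>)\<^sup>2)"
      "(\<integral>\<omega>. (b s \<omega> + b t \<omega>)\<^sup>2 \<partial>M) = ?vY" by simp_all
  have fact: "\<bar>(b s \<omega>)\<^sup>2 - (b t \<omega>)\<^sup>2\<bar> \<le> (r * (b s \<omega> - b t \<omega>)\<^sup>2 + (b s \<omega> + b t \<omega>)\<^sup>2 / r) / 2"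
    if "r > 0" for r \<omega>
  proof -
    have "(b s \<omega>)\<^sup>2 - (b t \<omega>)\<^sup>2 = (b s \<omega> - b t \<omega>) * (b s \<omega> + b t \<omega>)"
      by (simp add: power2_eq_square algebra_simps)
    then show ?thesis using young_aux[OF that] by simp
  qed
  have Ib: "integrable M (\<lambda>\<omega>. (r * (b s \<omega> - b t \<omega>)\<^sup>2 + (b s \<omega> + b t \<omega>)\<^sup>2 / r) / 2)" for r
    using X(1) Y(1) by auto
  have I: "integrable M (\<lambda>\<omega>. \<bar>(b s \<omega>)\<^sup>2 - (b t \<omega>)\<^sup>2\<bar>)"
    by (rule Bochner_Integration.integrable_bound[OF Ib[of 1]]) (use fact[of 1] in auto)
  have "(\<integral>\<omega>. \<bar>(b s \<omega>)\<^sup>2 - (b t \<omega>)\<^sup>2\<bar> \<partial>M) \<le> (r * \<bar>s - t\<bar> + 1 / r) / 2" if l: "r > 0" for r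
  proof -
    have "(\<integral>\<omega>. \<bar>(b s \<omega>)\<^sup>2 - (b t \<omega>)\<^sup>2\<bar> \<partial>M) \<le> (\<integral>\<omega>. (r * (b s \<omega> - b t \<omega>)\<^sup>2 + (b s \<omega> + b t \<omega>)\<^sup>2 / r) / 2 \<partial>M)"
      by (rule integral_mono[OF I Ib]) (rule fact[OF l])
    also have "\<dots> = (r * ?vX + ?vY / r) / 2"
      using X Y by (simp add: Bochner_Integration.integral_add integral_divide_zero)
    also have "\<dots> \<le> (r * \<bar>s - t\<bar> + 1 / r) / 2"
      using vX1 vY1 l by (intro divide_right_mono add_mono mult_left_mono divide_right_mono) auto
    finally show ?thesis .
  qed
  then have "(\<integral>\<omega>. \<bar>(b s \<omega>)\<^sup>2 - (b t \<omega>)\<^sup>2\<bar> \<partial>M) \<le> sqrt \<bar>s - t\<bar>"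
    by (intro inf_lambda) auto
  then show ?thesis using I by blast
qed




definition clip :: "real \<Rightarrow> real" where "clip t = max 0 (min 1 t)"

lemma clip_in: "clip t \<in> {0..1}" by (simp add: clip_def)
lemma clip_id: "t \<in> {0..1} \<Longrightarrow> clip t = t" by (simp add: clip_def)
lemma continuous_clip: "continuous_on UNIV clip"
  unfolding clip_def by (intro continuous_intros)

lemma floor_approx: "(\<lambda>n. real_of_int \<lfloor>real (Suc n) * t\<rfloor> / real (Suc n)) \<longlonglongrightarrow> t"
proof (rule tendsto_sandwich[of "\<lambda>n. t - 1 / real (Suc n)" _ _ "\<lambda>n. t"])
  show "\<forall>\<^sub>F n in sequentially. t - 1 / real (Suc n) \<le> real_of_int \<lfloor>real (Suc n) * t\<rfloor> / real (Suc n)"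
  proof (intro always_eventually allI)
    fix n
    have "real (Suc n) * t - 1 \<le> real_of_int \<lfloor>real (Suc n) * t\<rfloor>" by linarith
    then have "(real (Suc n) * t - 1) / real (Suc n) \<le> real_of_int \<lfloor>real (Suc n) * t\<rfloor> / real (Suc n)"
      by (rule divide_right_mono) simp
    moreover have "(real (Suc n) * t - 1) / real (Suc n) = t - 1 / real (Suc n)"
      by (simp add: field_simps)
    ultimately show "t - 1 / real (Suc n) \<le> real_of_int \<lfloor>real (Suc n) * t\<rfloor> / real (Suc n)"
      by simp
  qed
  show "\<forall>\<^sub>F n in sequentially. real_of_int \<lfloor>real (Suc n) * t\<rfloor> / real (Suc n) \<le> t"
  proof (intro always_eventually allI)
    fix n
    have "real_of_int \<lfloor>real (Suc n) * t\<rfloor> \<le> real (Suc n) * t" by linarith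
    then show "real_of_int \<lfloor>real (Suc n) * t\<rfloor> / real (Suc n) \<le> t"
      by (simp add: field_simps)
  qed
  have "(\<lambda>n. 1 / real (Suc n)) \<longlonglongrightarrow> 0" by (rule LIMSEQ_Suc[OF lim_const_over_n])
  then show "(\<lambda>n. t - 1 / real (Suc n)) \<longlonglongrightarrow> t"
    using tendsto_diff[OF tendsto_const, of _ 0 sequentially t] by simp
qed simp

lemma bb_joint_meas:
  fixes b :: "real \<Rightarrow> 'a \<Rightarrow> real"
  assumes meas: "\<forall>t\<in>{0..1}. b t \<in> borel_measurable M"
    and cont: "\<forall>\<omega>\<in>space M. continuous_on {0..1} (\<lambda>t. b t \<omega>)"
  shows "(\<lambda>x. b (clip (fst x)) (snd x)) \<in> borel_measurable (lborel \<Otimes>\<^sub>M M)"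
proof (rule borel_measurable_LIMSEQ_real)
  define u where "u n x = b (clip (real_of_int \<lfloor>real (Suc n) * fst x\<rfloor> / real (Suc n))) (snd x)" for n x
  show "u n \<in> borel_measurable (lborel \<Otimes>\<^sub>M M)" for n
  proof -
    have f: "(\<lambda>x. b (clip (real_of_int k / real (Suc n))) (snd x)) \<in> borel_measurable (lborel \<Otimes>\<^sub>M M)" for k :: int
    proof -
      have "b (clip (real_of_int k / real (Suc n))) \<in> borel_measurable M" using meas clip_in by blast
      then show ?thesis by measurable
    qed
    have g: "(\<lambda>x. \<lfloor>real (Suc n) * fst x\<rfloor>) \<in> (lborel \<Otimes>\<^sub>M M) \<rightarrow>\<^sub>M count_space UNIV"
      by measurable
    show ?thesis unfolding u_def
      by (rule measurable_compose_countable[where f="\<lambda>k x. b (clip (real_of_int k / real (Suc n))) (snd x)", OF f g])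
  qed
  fix x :: "real \<times> 'a" assume x: "x \<in> space (lborel \<Otimes>\<^sub>M M)"
  then have w: "snd x \<in> space M" by (auto simp: space_pair_measure)
  have c: "continuous_on {0..1} (\<lambda>t. b t (snd x))" using cont w by blast
  have "(\<lambda>n. clip (real_of_int \<lfloor>real (Suc n) * fst x\<rfloor> / real (Suc n))) \<longlonglongrightarrow> clip (fst x)"
    by (rule continuous_on_tendsto_compose[OF continuous_clip floor_approx, unfolded comp_def]) auto
  then show "(\<lambda>n. u n x) \<longlonglongrightarrow> b (clip (fst x)) (snd x)"
    unfolding u_def
    by (rule continuous_on_tendsto_compose[OF c, unfolded comp_def]) (auto simp: clip_def)
qed



lemma young4:
  fixes x m :: real assumes x: "0 \<le> x" and m: "0 < m"
  shows "x \<le> (x^4 / m^3 + 3 * m) / 4"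
proof -
  have "0 \<le> (x - m)\<^sup>2 * ((x + m)\<^sup>2 + 2 * m\<^sup>2)" by simp
  also have "(x - m)\<^sup>2 * ((x + m)\<^sup>2 + 2 * m\<^sup>2) = x^4 + 3 * m^4 - 4 * m^3 * x"
    by (simp add: power2_eq_square power4_eq_xxxx power3_eq_cube algebra_simps)
  finally have "4 * m^3 * x \<le> x^4 + 3 * m^4" by simp
  moreover have "m^3 * (x^4 / m^3 + 3 * m) = x^4 + 3 * m^4"
    using m by (simp add: distrib_left) (simp add: power3_eq_cube power4_eq_xxxx)
  ultimately have "m^3 * (4 * x) \<le> m^3 * (x^4 / m^3 + 3 * m)"
    by (simp add: mult_ac)
  then have "4 * x \<le> x^4 / m^3 + 3 * m" using m by simp
  then show ?thesis by simp
qed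

lemma inf_powr:
  fixes S T :: real
  assumes T: "0 \<le> T" and H: "\<And>m. m > 0 \<Longrightarrow> S \<le> (T / m^3 + 3 * m) / 4"
  shows "S \<le> T powr (1/4)"
proof (cases "T = 0")
  case True
  show ?thesis
  proof (rule ccontr)
    assume "\<not> S \<le> T powr (1/4)"
    then have S: "S > 0" using True by simp
    have "S \<le> (T / S^3 + 3 * S) / 4" by (rule H[OF S])
    then have "S \<le> 3 * S / 4" using True by simp
    then show False using S by simp
  qed
next
  case False
  then have T0: "T > 0" using T by simp
  define m where "m = T powr (1/4)"
  have m0: "m > 0" using T0 by (simp add: m_def)
  have "m^4 = m powr (real 4)" using m0 by (simp add: powr_realpow)
  also have "\<dots> = T" unfolding m_def using T0 by (simp add: powr_powr)
  finally have m4: "m^4 = T" .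
  have "T / m^3 = m" unfolding m4[symmetric] using m0 by (simp add: power4_eq_xxxx power3_eq_cube)
  then have "S \<le> (m + 3 * m) / 4" using H[OF m0] by simp
  then show ?thesis by (simp add: m_def)
qed



lemma T2_alt: "T2 f = (\<integral>t. indicator {0..1} t * (f t)\<^sup>2 \<partial>lborel)"
proof -
  have "T2 f = (LBINT t=ereal 0..ereal 1. (f t)\<^sup>2)" unfolding T2_def by (simp add: zero_ereal_def one_ereal_def)
  also have "\<dots> = (LBINT t:{0..1}. (f t)\<^sup>2)" by (rule interval_integral_Icc) simp
  finally show ?thesis by (simp add: set_lebesgue_integral_def)
qed

lemma T2_cong: "(\<And>t. t \<in> {0..1} \<Longrightarrow> f t = g t) \<Longrightarrow> T2 f = T2 g"
  unfolding T2_alt by (intro Bochner_Integration.integral_cong) (auto simp: indicator_def)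

lemma emeasure_01: "emeasure lborel {0..1::real} < \<infinity>" by simp

lemma stepA:
  fixes p F :: "real \<Rightarrow> real"
  assumes pc: "continuous_on UNIV p" and Kb: "\<And>x. \<bar>p x\<bar> \<le> K" and Fm[measurable]: "F \<in> borel_measurable borel"
  shows "ennreal \<bar>T2 (\<lambda>t. p (F t)) - T2 p\<bar> \<le> (\<integral>\<^sup>+t. ennreal (indicator {0..1} t * \<bar>(p (F t))\<^sup>2 - (p t)\<^sup>2\<bar>) \<partial>lborel)"
proof -
  have pm[measurable]: "p \<in> borel_measurable borel" by (rule borel_measurable_continuous_onI[OF pc])
  have K2: "(p x)\<^sup>2 \<le> K\<^sup>2" for x
    using power_mono[OF Kb[of x] abs_ge_zero, of 2] by simp
  have i1: "integrable lborel (\<lambda>t. indicator {0..1} t *\<^sub>R (p (F t))\<^sup>2)"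
    by (rule integrableI_bounded_set_indicator[where B="K\<^sup>2"]) (auto intro!: AE_I2 simp: K2)
  have i2: "integrable lborel (\<lambda>t. indicator {0..1} t *\<^sub>R (p t)\<^sup>2)"
    by (rule integrableI_bounded_set_indicator[where B="K\<^sup>2"]) (auto intro!: AE_I2 simp: K2)
  let ?phi = "\<lambda>t. indicator {0..1} t * ((p (F t))\<^sup>2 - (p t)\<^sup>2)"
  have i3: "integrable lborel ?phi"
    using Bochner_Integration.integrable_diff[OF i1 i2] by (simp add: algebra_simps)
  have "T2 (\<lambda>t. p (F t)) - T2 p = (\<integral>t. ?phi t \<partial>lborel)"
    unfolding T2_alt using i1 i2 by (simp add: algebra_simps)
  then have "\<bar>T2 (\<lambda>t. p (F t)) - T2 p\<bar> \<le> (\<integral>t. \<bar>?phi t\<bar> \<partial>lborel)"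
    using integral_norm_bound[of lborel ?phi] by simp
  then have "ennreal \<bar>T2 (\<lambda>t. p (F t)) - T2 p\<bar> \<le> ennreal (\<integral>t. \<bar>?phi t\<bar> \<partial>lborel)"
    by (rule ennreal_leI)
  also have "\<dots> = (\<integral>\<^sup>+t. ennreal \<bar>?phi t\<bar> \<partial>lborel)"
    by (rule nn_integral_eq_integral[symmetric]) (use i3 in auto)
  also have "\<dots> = (\<integral>\<^sup>+t. ennreal (indicator {0..1} t * \<bar>(p (F t))\<^sup>2 - (p t)\<^sup>2\<bar>) \<partial>lborel)"
    by (intro nn_integral_cong) (simp add: abs_mult)
  finally show ?thesis .
qed

lemma stepD:
  fixes h :: "real \<Rightarrow> real"
  assumes hm[measurable]: "h \<in> borel_measurable borel" and hb: "\<And>t. t \<in> {0..1} \<Longrightarrow> \<bar>h t\<bar> \<le> 1"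
  shows "(\<integral>\<^sup>+t. ennreal (indicator {0..1} t * sqrt \<bar>h t\<bar>) \<partial>lborel) \<le> ennreal (T2 h powr (1/4))"
    and "0 \<le> T2 h" and "T2 h \<le> 1"
proof -
  have b2: "(h t)\<^sup>2 \<le> 1" if "t \<in> {0..1}" for t
    using power_mono[OF hb[OF that] abs_ge_zero, of 2] by simp
  have b3: "\<bar>sqrt \<bar>h t\<bar>\<bar> \<le> 1" if "t \<in> {0..1}" for t
    using hb[OF that] by simp
  have iH: "integrable lborel (\<lambda>t. indicator {0..1} t *\<^sub>R (h t)\<^sup>2)"
    by (rule integrableI_bounded_set_indicator[where B=1]) (auto intro!: AE_I2 simp: b2)
  have iS: "integrable lborel (\<lambda>t. indicator {0..1} t *\<^sub>R sqrt \<bar>h t\<bar>)"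
    by (rule integrableI_bounded_set_indicator[where B=1]) (auto intro!: AE_I2 simp: hb)
  have i1: "integrable lborel (\<lambda>t. indicator {0..1::real} t *\<^sub>R (1::real))"
    by (rule integrableI_bounded_set_indicator[where B=1]) auto
  have int1: "(\<integral>t. (indicator {0..1::real} t :: real) \<partial>lborel) = 1" by simp
  show T0: "0 \<le> T2 h" unfolding T2_alt by (rule integral_nonneg_AE) auto
  show "T2 h \<le> 1"
  proof -
    have "T2 h \<le> (\<integral>t. indicator {0..1::real} t \<partial>lborel)"
      unfolding T2_alt using iH i1
      by (intro integral_mono) (auto simp: indicator_def b2 abs_le_square_iff hb)
    then show ?thesis by simp
  qed
  define S where "S = (\<integral>t. indicator {0..1} t * sqrt \<bar>h t\<bar> \<partial>lborel)"
  have "S \<le> (T2 h / m^3 + 3 * m) / 4" if m: "m > 0" for m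
  proof -
    have "S \<le> (\<integral>t. (indicator {0..1} t * (h t)\<^sup>2) / m^3 / 4 + (3 * m / 4) * indicator {0..1} t \<partial>lborel)"
      unfolding S_def
    proof (rule integral_mono)
      show "integrable lborel (\<lambda>t. indicator {0..1} t * sqrt \<bar>h t\<bar>)" using iS by simp
      show "integrable lborel (\<lambda>t. (indicator {0..1} t * (h t)\<^sup>2) / m^3 / 4 + (3 * m / 4) * indicator {0..1} t)"
        using iH i1 by auto
      fix t
      have "sqrt \<bar>h t\<bar> \<le> ((sqrt \<bar>h t\<bar>)^4 / m^3 + 3 * m) / 4" by (rule young4) (use m in auto)
      also have "(sqrt \<bar>h t\<bar>)^4 = (h t)\<^sup>2"
      proof -
        have "(sqrt \<bar>h t\<bar>)^4 = ((sqrt \<bar>h t\<bar>)\<^sup>2)\<^sup>2" by (simp only: power_mult[symmetric]) simp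
        also have "\<dots> = \<bar>h t\<bar>\<^sup>2" by simp
        finally show ?thesis by simp
      qed
      finally show "indicator {0..1} t * sqrt \<bar>h t\<bar> \<le> (indicator {0..1} t * (h t)\<^sup>2) / m^3 / 4 + (3 * m / 4) * indicator {0..1} t"
        by (auto simp: indicator_def add_divide_distrib)
    qed
    also have "\<dots> = (T2 h / m^3 + 3 * m) / 4"
      unfolding T2_alt using iH i1 by (simp add: add_divide_distrib)
    finally show ?thesis .
  qed
  then have S1: "S \<le> T2 h powr (1/4)" by (intro inf_powr T0) auto
  have "(\<integral>\<^sup>+t. ennreal (indicator {0..1} t * sqrt \<bar>h t\<bar>) \<partial>lborel) = ennreal S"
    unfolding S_def by (rule nn_integral_eq_integral) (use iS in auto)
  then show "(\<integral>\<^sup>+t. ennreal (indicator {0..1} t * sqrt \<bar>h t\<bar>) \<partial>lborel) \<le> ennreal (T2 h powr (1/4))"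
    using S1 by (simp add: ennreal_leI)
qed




theorem lemma11:
  fixes M :: "'a measure" and b :: "real \<Rightarrow> 'a \<Rightarrow> real"
  assumes "brownian_bridge M b"
  shows "\<exists>c>0. \<forall>\<mu> :: real measure.
           real_distribution \<mu> \<and> measure \<mu> {0..1} = 1 \<longrightarrow>
           (let F = cdf \<mu> in
             (\<integral>\<omega>. \<bar>T2 (\<lambda>t. b (F t) \<omega>) - T2 (\<lambda>t. b t \<omega>)\<bar> \<partial>M)
               \<le> c * (T (\<lambda>t. F t - t)) powr (1/4))"
proof (intro exI[of _ 1] conjI allI impI)
  note bb = assms
  have P: "prob_space M" and meas: "\<forall>t\<in>{0..1}. b t \<in> borel_measurable M"
    and cont: "\<forall>\<omega>\<in>space M. continuous_on {0..1} (\<lambda>t. b t \<omega>)"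
    using bb unfolding brownian_bridge_def by auto
  interpret prob_space M by (rule P)
  have Bm[measurable]: "(\<lambda>x. b (clip (fst x)) (snd x)) \<in> borel_measurable (lborel \<Otimes>\<^sub>M M)"
    by (rule bb_joint_meas[OF meas cont])
  fix \<mu> :: "real measure"
  assume "real_distribution \<mu> \<and> measure \<mu> {0..1} = 1"
  then interpret mu: real_distribution \<mu> by simp
  define F where "F = cdf \<mu>"
  have F01: "F t \<in> {0..1}" for t unfolding F_def using mu.cdf_nonneg mu.cdf_bounded_prob by auto
  have Fm[measurable]: "F \<in> borel_measurable borel"
    unfolding F_def by (rule borel_measurable_mono) (auto simp: mono_def mu.cdf_nondecreasing)
  define h where "h t = F t - t" for t
  have hm[measurable]: "h \<in> borel_measurable borel" unfolding h_def by measurable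
  have hb: "\<bar>h t\<bar> \<le> 1" if "t \<in> {0..1}" for t using F01[of t] that by (auto simp: h_def)
  define G where "G t \<omega> = ennreal (indicator {0..1} t * \<bar>(b (clip (F t)) \<omega>)\<^sup>2 - (b (clip t) \<omega>)\<^sup>2\<bar>)" for t \<omega>
  define D where "D \<omega> = \<bar>T2 (\<lambda>t. b (F t) \<omega>) - T2 (\<lambda>t. b t \<omega>)\<bar>" for \<omega>
  have A: "ennreal (D \<omega>) \<le> (\<integral>\<^sup>+t. G t \<omega> \<partial>lborel)" if w: "\<omega> \<in> space M" for \<omega>
  proof -
    define p where "p t = b (clip t) \<omega>" for t
    have c: "continuous_on {0..1} (\<lambda>t. b t \<omega>)" using cont w by blast
    have pc: "continuous_on UNIV p" unfolding p_def
      by (rule continuous_on_compose2[OF c continuous_clip]) (auto simp: clip_def)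
    have "bounded ((\<lambda>t. b t \<omega>) ` {0..1})"
      by (rule compact_imp_bounded[OF compact_continuous_image[OF c compact_Icc]])
    then obtain K where K0: "\<forall>x\<in>(\<lambda>t. b t \<omega>) ` {0..1}. norm x \<le> K"
      unfolding bounded_iff by blast
    have K: "\<bar>b s \<omega>\<bar> \<le> K" if "s \<in> {0..1}" for s using K0 that by auto
    have Kb: "\<bar>p x\<bar> \<le> K" for x unfolding p_def by (rule K[OF clip_in])
    have e1: "T2 (\<lambda>t. b (F t) \<omega>) = T2 (\<lambda>t. p (F t))"
      by (rule T2_cong) (simp add: p_def clip_id[OF F01])
    have e2: "T2 (\<lambda>t. b t \<omega>) = T2 p"
      by (rule T2_cong) (simp add: p_def clip_id)
    have "ennreal (D \<omega>) \<le> (\<integral>\<^sup>+t. ennreal (indicator {0..1} t * \<bar>(p (F t))\<^sup>2 - (p t)\<^sup>2\<bar>) \<partial>lborel)"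
      unfolding D_def e1 e2 by (rule stepA[OF pc Kb Fm])
    also have "\<dots> = (\<integral>\<^sup>+t. G t \<omega> \<partial>lborel)"
      by (simp add: G_def p_def)
    finally show ?thesis .
  qed
  have PS: "pair_sigma_finite lborel M"
    by (simp add: pair_sigma_finite_def sigma_finite_lborel prob_space_imp_sigma_finite P)
  have Gm: "case_prod G \<in> borel_measurable (lborel \<Otimes>\<^sub>M M)"
  proof -
    have FF: "(\<lambda>x. (F (fst x), snd x)) \<in> measurable (lborel \<Otimes>\<^sub>M M) (lborel \<Otimes>\<^sub>M M)" by measurable
    have BF: "(\<lambda>x. b (clip (F (fst x))) (snd x)) \<in> borel_measurable (lborel \<Otimes>\<^sub>M M)"
      using measurable_compose[OF FF Bm] by simp
    define u1 where "u1 x = b (clip (F (fst x))) (snd x)" for x :: "real \<times> 'a"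
    define u2 where "u2 x = b (clip (fst x)) (snd x)" for x :: "real \<times> 'a"
    have [measurable]: "u1 \<in> borel_measurable (lborel \<Otimes>\<^sub>M M)" using BF unfolding u1_def .
    have [measurable]: "u2 \<in> borel_measurable (lborel \<Otimes>\<^sub>M M)" using Bm unfolding u2_def .
    have "case_prod G = (\<lambda>x. ennreal (indicator {0..1} (fst x) * \<bar>(u1 x)\<^sup>2 - (u2 x)\<^sup>2\<bar>))"
      by (auto simp: G_def u1_def u2_def)
    also have "\<dots> \<in> borel_measurable (lborel \<Otimes>\<^sub>M M)" by measurable
    finally show ?thesis .
  qed
  have B: "(\<integral>\<^sup>+\<omega>. (\<integral>\<^sup>+t. G t \<omega> \<partial>lborel) \<partial>M) = (\<integral>\<^sup>+t. (\<integral>\<^sup>+\<omega>. G t \<omega> \<partial>M) \<partial>lborel)"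
    by (rule pair_sigma_finite.Fubini'[OF PS Gm])
  have C: "(\<integral>\<^sup>+\<omega>. G t \<omega> \<partial>M) \<le> ennreal (indicator {0..1} t * sqrt \<bar>h t\<bar>)" for t
  proof (cases "t \<in> {0..1}")
    case False
    then show ?thesis by (simp add: G_def)
  next
    case True
    have s: "F t \<in> {0..1}" by (rule F01)
    from bb_sq_diff[OF bb s True] have I: "integrable M (\<lambda>\<omega>. \<bar>(b (F t) \<omega>)\<^sup>2 - (b t \<omega>)\<^sup>2\<bar>)"
      and L: "(\<integral>\<omega>. \<bar>(b (F t) \<omega>)\<^sup>2 - (b t \<omega>)\<^sup>2\<bar> \<partial>M) \<le> sqrt \<bar>F t - t\<bar>" by auto
    have "(\<integral>\<^sup>+\<omega>. G t \<omega> \<partial>M) = (\<integral>\<^sup>+\<omega>. ennreal \<bar>(b (F t) \<omega>)\<^sup>2 - (b t \<omega>)\<^sup>2\<bar> \<partial>M)"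
      using True by (simp add: G_def clip_id[OF s] clip_id[OF True])
    also have "\<dots> = ennreal (\<integral>\<omega>. \<bar>(b (F t) \<omega>)\<^sup>2 - (b t \<omega>)\<^sup>2\<bar> \<partial>M)"
      by (rule nn_integral_eq_integral[OF I]) auto
    also have "\<dots> \<le> ennreal (indicator {0..1} t * sqrt \<bar>h t\<bar>)"
      using L True by (simp add: h_def ennreal_leI)
    finally show ?thesis .
  qed
  have T2h: "0 \<le> T2 h" "T2 h \<le> 1"
    by (rule stepD(2)[OF hm], rule hb, assumption) (rule stepD(3)[OF hm], rule hb, assumption)
  have Dd1: "(\<integral>\<^sup>+t. ennreal (indicator {0..1} t * sqrt \<bar>h t\<bar>) \<partial>lborel) \<le> ennreal (T2 h powr (1/4))"
    by (rule stepD(1)[OF hm], rule hb, assumption)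
  have main: "(\<integral>\<^sup>+\<omega>. ennreal (D \<omega>) \<partial>M) \<le> ennreal (T2 h powr (1/4))"
  proof -
    have "(\<integral>\<^sup>+\<omega>. ennreal (D \<omega>) \<partial>M) \<le> (\<integral>\<^sup>+\<omega>. (\<integral>\<^sup>+t. G t \<omega> \<partial>lborel) \<partial>M)"
      by (rule nn_integral_mono) (rule A)
    also have "\<dots> = (\<integral>\<^sup>+t. (\<integral>\<^sup>+\<omega>. G t \<omega> \<partial>M) \<partial>lborel)" by (rule B)
    also have "\<dots> \<le> (\<integral>\<^sup>+t. ennreal (indicator {0..1} t * sqrt \<bar>h t\<bar>) \<partial>lborel)"
      by (rule nn_integral_mono) (rule C)
    also have "\<dots> \<le> ennreal (T2 h powr (1/4))" by (rule Dd1)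
    finally show ?thesis .
  qed
  have fin: "T2 h powr (1/4) \<le> T h powr (1/4)"
  proof -
    have "T h powr (1/4) = T2 h powr (1/8)"
      unfolding T_def h_def[symmetric] using T2h(1) by (simp add: sqrt_def powr_powr root_powr_inverse) 
    moreover have "T2 h powr (1/4) \<le> T2 h powr (1/8)"
      by (rule powr_mono') (use T2h in auto)
    ultimately show ?thesis by simp
  qed
  have "(\<integral>\<omega>. D \<omega> \<partial>M) \<le> T2 h powr (1/4)"
  proof (cases "integrable M D")
    case True
    have "ennreal (\<integral>\<omega>. D \<omega> \<partial>M) = (\<integral>\<^sup>+\<omega>. ennreal (D \<omega>) \<partial>M)"
      by (rule nn_integral_eq_integral[symmetric, OF True]) (auto simp: D_def)
    with main have "ennreal (\<integral>\<omega>. D \<omega> \<partial>M) \<le> ennreal (T2 h powr (1/4))" by simp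
    then show ?thesis by (simp add: ennreal_le_iff)
  next
    case False
    then show ?thesis by (simp add: not_integrable_integral_eq)
  qed
  with fin have "(\<integral>\<omega>. D \<omega> \<partial>M) \<le> 1 * T h powr (1/4)" by simp
  then show "let F = cdf \<mu> in (\<integral>\<omega>. \<bar>T2 (\<lambda>t. b (F t) \<omega>) - T2 (\<lambda>t. b t \<omega>)\<bar> \<partial>M) \<le> 1 * T (\<lambda>t. F t - t) powr (1/4)"
    unfolding Let_def by (simp add: D_def h_def[abs_def] F_def)
qed simp


end
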